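(* Let $0<\alpha<1$, $\lambda\in\mathbb{R}$, $\tau>0$, and let $\{v^n\}_{n\ge0}$ be a real sequence. Then for every integer $n\ge1$, $$\mathcal{A}_t^{\alpha} v^{n}\cdot \delta_{t}^{\alpha,\lambda}v^n \geq \frac{1}{2}\Big[\frac{\alpha}{2}e^{\lambda \tau}+\Big(1-\frac{\alpha}{2}\Big)\Big] e^{-\frac{\alpha}{2}\lambda \tau} \delta_{t}^{\alpha,2\lambda} (v^n)^2+\frac{2-\alpha-e^{\lambda \tau}}{4}\tau^{\alpha}e^{-\frac{\alpha}{2}\lambda \tau}(\delta_{t}^{\alpha,\lambda}v^n)^2.$$ In particular, when $\alpha=1$ and $\lambda=0$, $$\frac{v^n+v^{n-1}}{2}\cdot\frac{v^n-v^{n-1}}{\tau}=\frac{(v^n)^2-(v^{n-1})^2}{2\tau}.$$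
   Context: $\mathcal{A}_t^{\alpha}v^n=(1-\frac{\alpha}{2})v^n+\frac{\alpha}{2}v^{n-1}$. $g_k^{\alpha}=(-1)^k\binom{\alpha}{k}$ are the coefficients of $(1-z)^{\alpha}=\sum_{k\ge0}g_k^{\alpha}z^k$, and for a constant $\mu$, $g_k^{\alpha,\mu}=e^{-(k-\frac{\alpha}{2})\mu\tau}g_k^{\alpha}$. For a sequence $\{w^n\}$, $\delta_t^{\alpha,\mu}w^n=\tau^{-\alpha}\sum_{k=0}^{n}g_k^{\alpha,\mu}w^{n-k}$; in particular $\delta_{t}^{\alpha,2\lambda}(v^n)^2=\tau^{-\alpha}\sum_{k=0}^{n}g_{k}^{\alpha,2\lambda}(v^{n-k})^2$. *)

theory Defs
  imports Complex_Main
begin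

definition avgA :: "real \<Rightarrow> (nat \<Rightarrow> real) \<Rightarrow> nat \<Rightarrow> real" where
  "avgA \<alpha> v n = (1 - \<alpha>/2) * v n + (\<alpha>/2) * v (n - 1)"

text \<open>g_k^alpha = (-1)^k binom(alpha,k), coefficients of (1-z)^alpha.\<close>
definition gcoef :: "real \<Rightarrow> nat \<Rightarrow> real" where
  "gcoef \<alpha> k = (-1) ^ k * (\<alpha> gchoose k)"

definition gcoef_mu :: "real \<Rightarrow> real \<Rightarrow> real \<Rightarrow> nat \<Rightarrow> real" where
  "gcoef_mu \<alpha> \<mu> \<tau> k = exp (- (real k - \<alpha>/2) * \<mu> * \<tau>) * gcoef \<alpha> k"

definition delta_t :: "real \<Rightarrow> real \<Rightarrow> real \<Rightarrow> (nat \<Rightarrow> real) \<Rightarrow> nat \<Rightarrow> real" where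
  "delta_t \<alpha> \<mu> \<tau> w n = \<tau> powr (- \<alpha>) * (\<Sum>k=0..n. gcoef_mu \<alpha> \<mu> \<tau> k * w (n - k))"

end

theory Submission
  imports Defs "HOL-Analysis.Convex"
begin

lemma g_rec: "gcoef \<alpha> (Suc k) = gcoef \<alpha> k * (real k - \<alpha>) / real (Suc k)"
proof -
  have "\<alpha> * (\<alpha> gchoose k) = of_nat k * (\<alpha> gchoose k) + of_nat (Suc k) * (\<alpha> gchoose (Suc k))"
    by (rule gbinomial_mult_1)
  hence h: "real (Suc k) * (\<alpha> gchoose (Suc k)) = (\<alpha> - real k) * (\<alpha> gchoose k)"
    by (simp add: algebra_simps)
  have "(\<alpha> gchoose (Suc k)) = (\<alpha> - real k) * (\<alpha> gchoose k) / real (Suc k)"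
    using h by (simp add: eq_divide_eq mult.commute del: of_nat_Suc)
  thus ?thesis unfolding gcoef_def by (simp add: algebra_simps del: of_nat_Suc)
qed

lemma g0: "gcoef \<alpha> 0 = 1" by (simp add: gcoef_def)
lemma g1: "gcoef \<alpha> 1 = - \<alpha>" by (simp add: gcoef_def)
lemma g1': "gcoef \<alpha> (Suc 0) = - \<alpha>" by (simp add: gcoef_def)

lemma g_neg: assumes "0 < \<alpha>" "\<alpha> < 1" shows "k \<ge> 1 \<Longrightarrow> gcoef \<alpha> k < 0"
proof (induction k)
  case 0 then show ?case by simp
next
  case (Suc k)
  show ?case
  proof (cases "k = 0")
    case True then show ?thesis using assms g1 by simp
  next
    case False
    hence "gcoef \<alpha> k < 0" "real k - \<alpha> > 0" using Suc assms by auto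
    then show ?thesis unfolding g_rec by (simp add: mult_neg_pos divide_neg_pos)
  qed
qed

lemma g_sum: "\<alpha> \<noteq> 0 \<Longrightarrow> (\<Sum>k=0..n. gcoef \<alpha> k) = gcoef \<alpha> n * (real n - \<alpha>) / (- \<alpha>)"
proof (induction n)
  case 0 then show ?case by (simp add: g0)
next
  case (Suc n)
  have "(\<Sum>k=0..Suc n. gcoef \<alpha> k) = gcoef \<alpha> n * (real n - \<alpha>) / (- \<alpha>) + gcoef \<alpha> (Suc n)"
    using Suc by simp
  also have "\<dots> = gcoef \<alpha> (Suc n) * (real (Suc n) - \<alpha>) / (- \<alpha>)"
    unfolding g_rec using Suc.prems by (simp add: divide_simps) (simp add: algebra_simps)
  finally show ?case .
qed

lemma g_sum_nonneg: assumes "0 < \<alpha>" "\<alpha> < 1" shows "(\<Sum>k=0..n. gcoef \<alpha> k) \<ge> 0"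
proof (cases "n = 0")
  case True then show ?thesis by (simp add: g0)
next
  case False
  hence "gcoef \<alpha> n < 0" "real n - \<alpha> > 0" using g_neg assms by auto
  hence "gcoef \<alpha> n * (real n - \<alpha>) < 0" by (simp add: mult_neg_pos)
  hence "gcoef \<alpha> n * (real n - \<alpha>) / \<alpha> \<le> 0" using assms by (simp add: divide_nonpos_pos)
  then show ?thesis using assms g_sum[of \<alpha> n] by simp
qed

lemma key:
  fixes \<alpha> a u0 u1 Q Rn :: real
  assumes "0 < \<alpha>" "\<alpha> < 1" "0 < a" "Q\<^sup>2 \<le> (1-\<alpha>) * Rn"
  shows "((1-\<alpha>/2)*u0 + \<alpha>/2*a*u1)*(u0 - \<alpha>*u1 + Q)
     - ((\<alpha>/2)*a + (1-\<alpha>/2))/2 * (u0\<^sup>2 - \<alpha>*u1\<^sup>2 - Rn)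
     - (2-\<alpha>-a)/4*(u0-\<alpha>*u1+Q)\<^sup>2 \<ge> 0"
proof -
  let ?c = "(\<alpha>/2)*a + (1-\<alpha>/2)"
  define q where "q = Q/(2*(1-\<alpha>))"
  have Qq: "Q = 2*(1-\<alpha>)*q" using assms unfolding q_def by simp
  have id: "((1-\<alpha>/2)*u0 + \<alpha>/2*a*u1)*(u0 - \<alpha>*u1 + Q)
     - ?c/2 * (u0\<^sup>2 - \<alpha>*u1\<^sup>2 - Rn)
     - (2-\<alpha>-a)/4*(u0-\<alpha>*u1+Q)\<^sup>2
     = a*(1-\<alpha>)/4 * (u0 + 2*q)\<^sup>2 + \<alpha>*(1-\<alpha>)*(2-\<alpha>)/4 * (u1 + 2*q)\<^sup>2
       + ?c/2 * (Rn - 4*(1-\<alpha>)*q\<^sup>2)"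
    unfolding Qq by (simp add: field_simps power2_eq_square)
  have "(1-\<alpha>)*(Rn - 4*(1-\<alpha>)*q\<^sup>2) \<ge> 0" using assms(4) unfolding Qq
    by (simp add: algebra_simps power2_eq_square)
  hence "Rn - 4*(1-\<alpha>)*q\<^sup>2 \<ge> 0" using assms by (simp add: zero_le_mult_iff)
  moreover have "?c > 0" using assms by (simp add: add_pos_pos)
  ultimately have n3: "?c/2 * (Rn - 4*(1-\<alpha>)*q\<^sup>2) \<ge> 0" by simp
  have n1: "a*(1-\<alpha>)/4 * (u0 + 2*q)\<^sup>2 \<ge> 0" using assms by simp
  have n2: "\<alpha>*(1-\<alpha>)*(2-\<alpha>)/4 * (u1 + 2*q)\<^sup>2 \<ge> 0" using assms by simp
  show ?thesis by (subst id) (intro add_nonneg_nonneg n1 n2 n3)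
qed

lemma g_one_zero: "k \<ge> 2 \<Longrightarrow> gcoef 1 k = 0"
proof (induction k)
  case 0 then show ?case by simp
next
  case (Suc k)
  show ?case
  proof (cases "k = 1")
    case True then show ?thesis by (simp add: g_rec)
  next
    case False then show ?thesis using Suc by (simp add: g_rec)
  qed
qed

lemma sum_split01:
  fixes f :: "nat \<Rightarrow> real"
  assumes "1 \<le> n"
  shows "(\<Sum>k=0..n. f k) = f 0 + f 1 + (\<Sum>k=2..n. f k)"
proof -
  have "(\<Sum>k=0..n. f k) = f 0 + (\<Sum>k=Suc 0..n. f k)" by (rule sum.atLeast_Suc_atMost) simp
  also have "(\<Sum>k=Suc 0..n. f k) = f 1 + (\<Sum>k=Suc 1..n. f k)"
    using assms by (subst sum.atLeast_Suc_atMost) auto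
  finally show ?thesis by (simp add: numeral_2_eq_2)
qed

lemma CS_weighted:
  fixes w u :: "nat \<Rightarrow> real"
  assumes "\<And>k. k \<in> I \<Longrightarrow> w k \<ge> 0"
  shows "(\<Sum>k\<in>I. w k * u k)\<^sup>2 \<le> (\<Sum>k\<in>I. w k) * (\<Sum>k\<in>I. w k * (u k)\<^sup>2)"
proof -
  have "(\<Sum>k\<in>I. sqrt (w k) * (sqrt (w k) * u k))\<^sup>2
        \<le> (\<Sum>k\<in>I. (sqrt (w k))\<^sup>2) * (\<Sum>k\<in>I. (sqrt (w k) * u k)\<^sup>2)"
    by (rule Cauchy_Schwarz_ineq_sum)
  moreover have "(\<Sum>k\<in>I. sqrt (w k) * (sqrt (w k) * u k)) = (\<Sum>k\<in>I. w k * u k)"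
    by (rule sum.cong) (use assms in \<open>auto simp: mult.assoc[symmetric]\<close>)
  moreover have "(\<Sum>k\<in>I. (sqrt (w k))\<^sup>2) = (\<Sum>k\<in>I. w k)"
    by (rule sum.cong) (use assms in auto)
  moreover have "(\<Sum>k\<in>I. (sqrt (w k) * u k)\<^sup>2) = (\<Sum>k\<in>I. w k * (u k)\<^sup>2)"
    by (rule sum.cong) (use assms in \<open>auto simp: power_mult_distrib\<close>)
  ultimately show ?thesis by simp
qed

theorem lemma4p2:
  fixes \<alpha> lam \<tau> :: real and v :: "nat \<Rightarrow> real" and n :: nat
  assumes "0 < \<alpha>" and "\<alpha> < 1" and "0 < \<tau>" and "1 \<le> n"
  shows "(avgA \<alpha> v n * delta_t \<alpha> lam \<tau> v n \<ge>
           1/2 * ((\<alpha>/2) * exp (lam * \<tau>) + (1 - \<alpha>/2)) * exp (- (\<alpha>/2) * lam * \<tau>)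
             * delta_t \<alpha> (2 * lam) \<tau> (\<lambda>m. (v m)\<^sup>2) n
         + (2 - \<alpha> - exp (lam * \<tau>)) / 4 * \<tau> powr \<alpha> * exp (- (\<alpha>/2) * lam * \<tau>)
             * (delta_t \<alpha> lam \<tau> v n)\<^sup>2)
       \<and> (avgA 1 v n * delta_t 1 0 \<tau> v n = (v n + v (n - 1)) / 2 * ((v n - v (n - 1)) / \<tau>)
         \<and> (v n + v (n - 1)) / 2 * ((v n - v (n - 1)) / \<tau>) = ((v n)\<^sup>2 - (v (n - 1))\<^sup>2) / (2 * \<tau>))"
proof (intro conjI)
  show "(v n + v (n - 1)) / 2 * ((v n - v (n - 1)) / \<tau>) = ((v n)\<^sup>2 - (v (n - 1))\<^sup>2) / (2 * \<tau>)"
    by (simp add: field_simps power2_eq_square)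
  have s0: "(\<Sum>k=2..n. gcoef_mu 1 0 \<tau> k * v (n - k)) = 0"
    by (rule sum.neutral) (simp add: gcoef_mu_def g_one_zero)
  have "delta_t 1 0 \<tau> v n = (v n - v (n - 1)) / \<tau>"
    unfolding delta_t_def sum_split01[OF assms(4)] s0
    using assms(3) by (simp add: gcoef_mu_def g0 g1 g1' powr_minus_divide)
  then show "avgA 1 v n * delta_t 1 0 \<tau> v n = (v n + v (n - 1)) / 2 * ((v n - v (n - 1)) / \<tau>)"
    by (simp add: avgA_def field_simps)
next
  define a where "a = exp (lam * \<tau>)"
  define Ep where "Ep = exp (\<alpha>/2 * lam * \<tau>)"
  define t where "t = \<tau> powr (- \<alpha>)"
  define u where "u k = exp (- real k * lam * \<tau>) * v (n - k)" for k
  define c where "c = (\<alpha>/2) * a + (1 - \<alpha>/2)"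
  have apos: "a > 0" and Eppos: "Ep > 0" and tpos: "t > 0"
    unfolding a_def Ep_def t_def using assms by auto
  have tinv: "\<tau> powr \<alpha> = 1 / t" unfolding t_def using assms(3)
    by (simp add: powr_minus_divide)
  have Einv: "exp (- (\<alpha>/2) * lam * \<tau>) = 1 / Ep" unfolding Ep_def
    by (simp add: exp_minus')
  have h1: "gcoef_mu \<alpha> lam \<tau> k * v (n - k) = Ep * (gcoef \<alpha> k * u k)" for k
  proof -
    have "exp (- (real k - \<alpha>/2) * lam * \<tau>) = Ep * exp (- real k * lam * \<tau>)"
      unfolding Ep_def by (simp add: exp_add[symmetric] algebra_simps)
    thus ?thesis unfolding gcoef_mu_def u_def by simp
  qed
  have h2: "gcoef_mu \<alpha> (2 * lam) \<tau> k * (v (n - k))\<^sup>2 = Ep\<^sup>2 * (gcoef \<alpha> k * (u k)\<^sup>2)" for k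
  proof -
    have "exp (- (real k - \<alpha>/2) * (2 * lam) * \<tau>) = (Ep * exp (- real k * lam * \<tau>))\<^sup>2"
      unfolding Ep_def power2_eq_square by (simp add: exp_add[symmetric] algebra_simps)
    thus ?thesis unfolding gcoef_mu_def u_def by (simp add: power_mult_distrib)
  qed
  have u0: "u 0 = v n" unfolding u_def by simp
  have u1: "v (n - 1) = a * u 1" unfolding u_def a_def
    by (simp add: exp_minus' field_simps)
  define Q where "Q = (\<Sum>k=2..n. gcoef \<alpha> k * u k)"
  define Rn where "Rn = (\<Sum>k=2..n. (- gcoef \<alpha> k) * (u k)\<^sup>2)"
  define P where "P = u 0 - \<alpha> * u 1 + Q"
  define T where "T = (u 0)\<^sup>2 - \<alpha> * (u 1)\<^sup>2 - Rn"
  have dP: "delta_t \<alpha> lam \<tau> v n = t * Ep * P"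
  proof -
    have "(\<Sum>k=0..n. gcoef_mu \<alpha> lam \<tau> k * v (n - k)) = (\<Sum>k=0..n. Ep * (gcoef \<alpha> k * u k))"
      using h1 by simp
    also have "\<dots> = Ep * (\<Sum>k=0..n. gcoef \<alpha> k * u k)" by (simp add: sum_distrib_left)
    also have "(\<Sum>k=0..n. gcoef \<alpha> k * u k) = P"
      unfolding sum_split01[OF assms(4)] P_def Q_def by (simp add: g0 g1 g1')
    finally show ?thesis unfolding delta_t_def t_def by simp
  qed
  have dT: "delta_t \<alpha> (2 * lam) \<tau> (\<lambda>m. (v m)\<^sup>2) n = t * Ep\<^sup>2 * T"
  proof -
    have "(\<Sum>k=0..n. gcoef_mu \<alpha> (2*lam) \<tau> k * (v (n - k))\<^sup>2) = (\<Sum>k=0..n. Ep\<^sup>2 * (gcoef \<alpha> k * (u k)\<^sup>2))"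
      using h2 by simp
    also have "\<dots> = Ep\<^sup>2 * (\<Sum>k=0..n. gcoef \<alpha> k * (u k)\<^sup>2)" by (simp add: sum_distrib_left)
    also have "(\<Sum>k=0..n. gcoef \<alpha> k * (u k)\<^sup>2) = T"
      unfolding sum_split01[OF assms(4)] T_def Rn_def by (simp add: g0 g1 g1' sum_negf)
    finally show ?thesis unfolding delta_t_def t_def by simp
  qed
  have wnn: "\<And>k. k \<in> {2..n} \<Longrightarrow> - gcoef \<alpha> k \<ge> 0"
    using g_neg[OF assms(1,2)] by (simp add: less_imp_le)
  have Rnn: "Rn \<ge> 0" unfolding Rn_def
    by (rule sum_nonneg) (use wnn in \<open>simp add: mult_nonpos_nonneg\<close>)
  have ssum: "(\<Sum>k=2..n. - gcoef \<alpha> k) \<le> 1 - \<alpha>"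
  proof -
    have "(\<Sum>k=0..n. gcoef \<alpha> k) = 1 - \<alpha> + (\<Sum>k=2..n. gcoef \<alpha> k)"
      unfolding sum_split01[OF assms(4)] by (simp add: g0 g1 g1')
    thus ?thesis using g_sum_nonneg[OF assms(1,2), of n] by (simp add: sum_negf)
  qed
  have "Q\<^sup>2 = (\<Sum>k=2..n. (- gcoef \<alpha> k) * u k)\<^sup>2"
    unfolding Q_def by (simp add: sum_negf)
  also have "\<dots> \<le> (\<Sum>k=2..n. - gcoef \<alpha> k) * Rn"
    unfolding Rn_def by (rule CS_weighted) (use wnn in simp)
  also have "\<dots> \<le> (1 - \<alpha>) * Rn" using ssum Rnn by (rule mult_right_mono)
  finally have QR: "Q\<^sup>2 \<le> (1 - \<alpha>) * Rn" .
  have F: "((1-\<alpha>/2)*u 0 + \<alpha>/2*a*u 1)*P - c/2 * T - (2-\<alpha>-a)/4*P\<^sup>2 \<ge> 0"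
    using key[OF assms(1,2) apos QR, of "u 0" "u 1"] unfolding P_def T_def c_def by simp
  have A: "avgA \<alpha> v n = (1-\<alpha>/2)*u 0 + \<alpha>/2*a*u 1"
    unfolding avgA_def u0 u1 by simp
  have L: "avgA \<alpha> v n * delta_t \<alpha> lam \<tau> v n = t * Ep * (((1-\<alpha>/2)*u 0 + \<alpha>/2*a*u 1)*P)"
    unfolding A dP by simp
  have R: "1/2 * ((\<alpha>/2) * exp (lam * \<tau>) + (1 - \<alpha>/2)) * exp (- (\<alpha>/2) * lam * \<tau>)
             * delta_t \<alpha> (2 * lam) \<tau> (\<lambda>m. (v m)\<^sup>2) n
         + (2 - \<alpha> - exp (lam * \<tau>)) / 4 * \<tau> powr \<alpha> * exp (- (\<alpha>/2) * lam * \<tau>)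
             * (delta_t \<alpha> lam \<tau> v n)\<^sup>2 = t * Ep * (c/2 * T + (2-\<alpha>-a)/4*P\<^sup>2)"
    unfolding dP dT tinv Einv a_def[symmetric] c_def[symmetric]
    using tpos Eppos by (simp add: field_simps power2_eq_square)
  have "t * Ep * (((1-\<alpha>/2)*u 0 + \<alpha>/2*a*u 1)*P - c/2 * T - (2-\<alpha>-a)/4*P\<^sup>2) \<ge> 0"
    using tpos Eppos F by simp
  then show "avgA \<alpha> v n * delta_t \<alpha> lam \<tau> v n \<ge>
           1/2 * ((\<alpha>/2) * exp (lam * \<tau>) + (1 - \<alpha>/2)) * exp (- (\<alpha>/2) * lam * \<tau>)
             * delta_t \<alpha> (2 * lam) \<tau> (\<lambda>m. (v m)\<^sup>2) n
         + (2 - \<alpha> - exp (lam * \<tau>)) / 4 * \<tau> powr \<alpha> * exp (- (\<alpha>/2) * lam * \<tau>)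
             * (delta_t \<alpha> lam \<tau> v n)\<^sup>2"
    unfolding L R by (simp add: algebra_simps)
qed

end
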